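(* Let $L$ be a field of characteristic $p>0$ and let $Z,T$ be indeterminates over $L$. Let $g = Z^{p^e} - \alpha T^m + \beta$, where $\alpha,\beta \in L$ are nonzero and $e \ge 1$, $m>1$ are integers with $m$ coprime to $p$. Then $D = L[Z,T]/(g)$ does not admit any non-trivial exponential map.
   Context: For an $L$-algebra $D$ and an indeterminate $U$ over $D$, an $L$-algebra homomorphism $\phi = \phi_U : D \to D[U]$ is an exponential map on $D$ if (i) $\varepsilon_0 \circ \phi_U$ is the identity of $D$, where $\varepsilon_0 : D[U]\to D$ is evaluation at $U=0$; and (ii) $\phi_V \circ \phi_U = \phi_{V+U}$, where $\phi_V: D \to D[V]$ (same map with $U$ replaced by another indeterminate $V$) is extended to $D[U] \to D[V,U]$ by $\phi_V(U)=U$. The ring of invariants is $D^{\phi} = \{a\in D : \phi(a) = a\}$, and $\phi$ is non-trivial if $D^\phi \neq D$. *)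

theory Defs
  imports "HOL-Computational_Algebra.Computational_Algebra"
begin

text \<open>Polynomials in two variables Z, T over L are represented as 'a poly poly:
  the outer variable is Z, the inner variable (in the coefficients) is T.\<close>

definition gpoly :: "nat \<Rightarrow> nat \<Rightarrow> nat \<Rightarrow> 'a::field \<Rightarrow> 'a \<Rightarrow> 'a poly poly" where
  "gpoly p e m \<alpha> \<beta> = monom 1 (p ^ e) + [: [:\<beta>:] - monom \<alpha> m :]"

definition alg_map :: "('a::field \<Rightarrow> 'd::comm_ring_1) \<Rightarrow> bool" where
  "alg_map \<iota> \<longleftrightarrow> \<iota> 1 = 1 \<and> (\<forall>x y. \<iota> (x + y) = \<iota> x + \<iota> y) \<and> (\<forall>x y. \<iota> (x * y) = \<iota> x * \<iota> y)"

definition ev2 :: "('a::field \<Rightarrow> 'd::comm_ring_1) \<Rightarrow> 'd \<Rightarrow> 'd \<Rightarrow> 'a poly poly \<Rightarrow> 'd" where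
  "ev2 \<iota> z t f = poly (map_poly (\<lambda>q. poly (map_poly \<iota> q) t) f) z"

text \<open>D is presented as L[Z,T]/(g): via Z |-> z, T |-> t, the evaluation map is
  surjective with kernel the principal ideal (g).\<close>
definition presents :: "('a::field \<Rightarrow> 'd::comm_ring_1) \<Rightarrow> 'd \<Rightarrow> 'd \<Rightarrow> 'a poly poly \<Rightarrow> bool" where
  "presents \<iota> z t g \<longleftrightarrow> alg_map \<iota> \<and> surj (ev2 \<iota> z t) \<and> (\<forall>f. ev2 \<iota> z t f = 0 \<longleftrightarrow> g dvd f)"

text \<open>Exponential map phi = phi_U : D -> D[U] (L-algebra homomorphism).
  Condition (ii): phi_V(phi_U(a)) = phi_{V+U}(a) in D[V,U], represented as
  'd poly poly with outer variable U and inner variable V. The left side is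
  map_poly phi (phi a); the right side substitutes U := V + U in phi a.\<close>
definition exp_map :: "('a::field \<Rightarrow> 'd::comm_ring_1) \<Rightarrow> ('d \<Rightarrow> 'd poly) \<Rightarrow> bool" where
  "exp_map \<iota> \<phi> \<longleftrightarrow>
     (\<forall>x y. \<phi> (x + y) = \<phi> x + \<phi> y) \<and>
     (\<forall>x y. \<phi> (x * y) = \<phi> x * \<phi> y) \<and>
     \<phi> 1 = 1 \<and>
     (\<forall>c. \<phi> (\<iota> c) = [:\<iota> c:]) \<and>
     (\<forall>a. poly (\<phi> a) 0 = a) \<and>
     (\<forall>a. map_poly \<phi> (\<phi> a) = poly (map_poly (\<lambda>c. [:[:c:]:]) (\<phi> a)) [:[:0, 1:], 1:])"

definition trivial_exp_map :: "('d::comm_ring_1 \<Rightarrow> 'd poly) \<Rightarrow> bool" where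
  "trivial_exp_map \<phi> \<longleftrightarrow> (\<forall>a. \<phi> a = [:a:])"

end

theory Submission
  imports Defs
begin


lemma hom_sum:
  assumes "f 0 = 0" "\<And>x y. f (x+y) = f x + f y"
  shows "f (sum g A) = (\<Sum>a\<in>A. f (g a))"
  by (induct A rule: infinite_finite_induct) (auto simp: assms)

lemma map_poly_hom_add:
  fixes f :: "'a::comm_semiring_0 \<Rightarrow> 'b::comm_semiring_0"
  assumes "f 0 = 0" "\<And>x y. f (x+y) = f x + f y"
  shows "map_poly f (p + q) = map_poly f p + map_poly f q"
  by (rule poly_eqI) (simp add: coeff_map_poly assms)

lemma map_poly_hom_mult:
  fixes f :: "'a::comm_semiring_0 \<Rightarrow> 'b::comm_semiring_0"
  assumes "f 0 = 0" "\<And>x y. f (x+y) = f x + f y" "\<And>x y. f (x*y) = f x * f y"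
  shows "map_poly f (p * q) = map_poly f p * map_poly f q"
  by (rule poly_eqI) (simp add: coeff_map_poly assms coeff_mult hom_sum[of f, OF assms(1,2)])

lemma iter_coeff:
  fixes P :: "'d::comm_ring_1 poly"
  shows "coeff (coeff (poly (map_poly (\<lambda>c. [:[:c:]:]) P) [:[:0,1:],1:]) k) l
         = of_nat ((k+l) choose k) * coeff P (k+l)"
proof (induction P arbitrary: k l)
  case 0
  then show ?case by simp
next
  case (pCons c P)
  have h: "map_poly (\<lambda>c. [:[:c:]:]) (pCons c P) = pCons [:[:c:]:] (map_poly (\<lambda>c. [:[:c:]:]) P)"
    by (rule map_poly_pCons) simp
  show ?case
  proof (cases k)
    case 0
    then show ?thesis
      using pCons.IH by (cases l) (auto simp: h coeff_pCons split: nat.splits)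
  next
    case (Suc k')
    then show ?thesis
      using pCons.IH by (cases l) (auto simp: h coeff_pCons algebra_simps split: nat.splits)
  qed
qed



locale ctx =
  fixes \<iota> :: "'a::field \<Rightarrow> 'd::comm_ring_1" and z t :: 'd and p e m :: nat and \<alpha> \<beta> :: 'a
  assumes charp: "CHAR('a) = p" and ppos: "p > 0" and a0: "\<alpha> \<noteq> 0" and b0: "\<beta> \<noteq> 0"
    and e1: "e \<ge> 1" and m1: "m > 1" and cop: "coprime m p"
    and pres: "presents \<iota> z t (gpoly p e m \<alpha> \<beta>)"
begin

definition q where "q = p ^ e"
definition E1 :: "'a poly \<Rightarrow> 'd" where "E1 h = poly (map_poly \<iota> h) t"
definition fT :: "'a poly" where "fT = monom \<alpha> m - [:\<beta>:]"
abbreviation "g \<equiv> gpoly p e m \<alpha> \<beta>"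

lemma alg: "alg_map \<iota>" using pres by (simp add: presents_def)
lemma i_add: "\<iota> (x + y) = \<iota> x + \<iota> y" using alg by (simp add: alg_map_def)
lemma i_mult: "\<iota> (x * y) = \<iota> x * \<iota> y" using alg by (simp add: alg_map_def)
lemma i_1: "\<iota> 1 = 1" using alg by (simp add: alg_map_def)
lemma i_0: "\<iota> 0 = 0" using i_add[of 0 0] by simp
lemma i_minus: "\<iota> (- x) = - \<iota> x"
  using i_add[of x "-x"] by (simp add: i_0 eq_neg_iff_add_eq_0 add.commute)
lemma i_diff: "\<iota> (x - y) = \<iota> x - \<iota> y"
  using i_add[of x "-y"] by (simp add: i_minus)
lemma i_of_nat: "\<iota> (of_nat n) = of_nat n"
  by (induct n) (simp_all add: i_0 i_add i_1)
lemma i_power: "\<iota> (x ^ n) = \<iota> x ^ n"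
  by (induct n) (simp_all add: i_1 i_mult)

lemma E1_add: "E1 (a + b) = E1 a + E1 b"
  by (simp add: E1_def map_poly_hom_add i_0 i_add)
lemma E1_mult: "E1 (a * b) = E1 a * E1 b"
  by (simp add: E1_def map_poly_hom_mult i_0 i_add i_mult)
lemma E1_const: "E1 [:c:] = \<iota> c"
  by (simp add: E1_def map_poly_pCons i_0)
lemma E1_0: "E1 0 = 0" by (simp add: E1_def)
lemma E1_1: "E1 1 = 1" using E1_const[of 1] i_1 by (simp add: one_pCons)
lemma E1_pCons: "E1 (pCons a h) = \<iota> a + t * E1 h"
  by (simp add: E1_def map_poly_pCons i_0)
lemma E1_monom: "E1 (monom c k) = \<iota> c * t ^ k"
  by (simp add: E1_def map_poly_monom i_0 poly_monom)
lemma E1_power: "E1 (h ^ k) = E1 h ^ k"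
  by (induct k) (simp_all add: E1_1 E1_mult)
lemma E1_minus: "E1 (- a) = - E1 a"
  using E1_add[of a "-a"] by (simp add: E1_0 eq_neg_iff_add_eq_0 add.commute)
lemma E1_diff: "E1 (a - b) = E1 a - E1 b"
  using E1_add[of a "-b"] by (simp add: E1_minus)
lemma E1_sum: "E1 (sum f A) = (\<Sum>a\<in>A. E1 (f a))"
  by (rule hom_sum) (simp_all add: E1_0 E1_add)

lemma ev2_E1: "ev2 \<iota> z t F = poly (map_poly E1 F) z"
  by (simp add: ev2_def E1_def[abs_def])
lemma ev2_add: "ev2 \<iota> z t (a + b) = ev2 \<iota> z t a + ev2 \<iota> z t b"
  by (simp add: ev2_E1 map_poly_hom_add E1_0 E1_add)
lemma ev2_mult: "ev2 \<iota> z t (a * b) = ev2 \<iota> z t a * ev2 \<iota> z t b"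
  by (simp add: ev2_E1 map_poly_hom_mult E1_0 E1_add E1_mult)
lemma ev2_const: "ev2 \<iota> z t [:h:] = E1 h"
  by (simp add: ev2_E1 map_poly_pCons E1_0)
lemma ev2_0: "ev2 \<iota> z t 0 = 0" by (simp add: ev2_E1)
lemma ev2_1: "ev2 \<iota> z t 1 = 1" using ev2_const[of 1] E1_1 by (simp add: one_pCons)
lemma ev2_pCons: "ev2 \<iota> z t (pCons a F) = E1 a + z * ev2 \<iota> z t F"
  by (simp add: ev2_E1 map_poly_pCons E1_0)
lemma ev2_monom: "ev2 \<iota> z t (monom c k) = E1 c * z ^ k"
  by (simp add: ev2_E1 map_poly_monom E1_0 poly_monom)
lemma ev2_diff: "ev2 \<iota> z t (a - b) = ev2 \<iota> z t a - ev2 \<iota> z t b"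
  using ev2_add[of "a - b" b] by (simp add: algebra_simps)

lemma ker: "ev2 \<iota> z t F = 0 \<longleftrightarrow> g dvd F" using pres by (simp add: presents_def)
lemma surj: "surj (ev2 \<iota> z t)" using pres by (simp add: presents_def)

lemma p_prime: "prime p" using charp ppos prime_CHAR_semidom[where 'a='a] by simp
lemma p2: "p \<ge> 2" using p_prime prime_ge_2_nat by blast
lemma q2: "q \<ge> 2"
proof -
  have "p ^ 1 \<le> p ^ e" using e1 ppos by (intro power_increasing) auto
  thus ?thesis using p2 by (simp add: q_def)
qed

lemma g_eq: "g = monom 1 q - [:fT:]"
  by (simp add: gpoly_def q_def fT_def)
lemma degree_g: "degree g = q" and lead_g: "lead_coeff g = 1"
proof -
  have "degree [:fT:] < degree (monom (1::'a poly) q)" using q2 by (simp add: degree_monom_eq)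
  then have "degree (monom (1::'a poly) q - [:fT:]) = degree (monom (1::'a poly) q)"
    using degree_add_eq_left[of "-[:fT:]" "monom 1 q"] by (simp only: diff_conv_add_uminus degree_minus)
  then have d: "degree g = q" unfolding g_eq by (simp add: degree_monom_eq)
  then show "degree g = q" .
  show "lead_coeff g = 1" unfolding d using q2 by (simp add: g_eq coeff_pCons split: nat.splits)
qed
lemma g_nz: "g \<noteq> 0" using degree_g q2 by auto

lemma zq: "z ^ q = E1 fT"
proof -
  have "ev2 \<iota> z t g = 0" using ker by simp
  thus ?thesis by (simp add: g_eq ev2_diff ev2_monom ev2_const E1_1)
qed
lemma E1_fT: "E1 fT = \<iota> \<alpha> * t ^ m - \<iota> \<beta>"
  by (simp add: fT_def E1_diff E1_monom E1_const)

lemma E1_inj: "E1 h = 0 \<Longrightarrow> h = 0"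
proof (rule ccontr)
  assume "E1 h = 0" "h \<noteq> 0"
  then have "g dvd [:h:]" using ker ev2_const by metis
  then have "degree g \<le> degree [:h:]" using \<open>h \<noteq> 0\<close> by (intro dvd_imp_degree_le) auto
  then show False using degree_g q2 by simp
qed

lemma one_nz: "(1::'d) \<noteq> 0"
  using E1_inj[of 1] E1_1 by auto

lemma i_inj: "\<iota> x = 0 \<Longrightarrow> x = 0"
proof (rule ccontr)
  assume "\<iota> x = 0" "x \<noteq> 0"
  then have "\<iota> (x * inverse x) = 0" by (simp only: i_mult mult_zero_left)
  moreover have "x * inverse x = 1" using \<open>x \<noteq> 0\<close> by simp
  ultimately have "\<iota> 1 = 0" by simp
  then show False using one_nz i_1 by simp
qed

lemma char_d: "CHAR('d) = p"
proof (rule CHAR_eqI)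
  have "of_nat p = (0::'a)" using charp of_nat_CHAR by metis
  then show "of_nat p = (0::'d)" using i_of_nat[of p] i_0 by simp
  fix x assume "of_nat x = (0::'d)"
  then have "\<iota> (of_nat x) = 0" by (simp add: i_of_nat)
  then have "of_nat x = (0::'a)" by (rule i_inj)
  then show "p dvd x" using charp of_nat_eq_0_iff_char_dvd by blast
qed

lemma frob_sum_d: "(sum f A :: 'd) ^ q = (\<Sum>i\<in>A. f i ^ q)"
  by (rule freshmans_dream_sum') (simp_all add: char_d p_prime q_def)

end


lemma poly_sum_lt: fixes P :: "'a::comm_semiring_1 poly" assumes "degree P < n" shows "poly P x = (\<Sum>i<n. coeff P i * x ^ i)"
proof -
  have "poly P x = (\<Sum>i\<le>degree P. coeff P i * x ^ i)" by (rule poly_altdef)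
  also have "\<dots> = (\<Sum>i<n. coeff P i * x ^ i)"
    using assms by (intro sum.mono_neutral_left) (auto simp: coeff_eq_0)
  finally show ?thesis .
qed

lemma degree_sum_less:
  fixes f :: "'b \<Rightarrow> 'a::comm_ring_1 poly"
  assumes "finite A" "\<forall>j\<in>A. f j = 0 \<or> degree (f j) < D"
  shows "sum f A = 0 \<or> degree (sum f A) < D"
  using assms
proof (induction A rule: finite_induct)
  case (insert x F)
  then have "sum f F = 0 \<or> degree (sum f F) < D" "f x = 0 \<or> degree (f x) < D" by auto
  then show ?case
    by (auto simp: sum.insert[OF insert(1,2)] intro: le_less_trans[OF degree_add_le_max] )
qed simp

lemma distinct_deg:
  fixes q m a b i j :: nat
  assumes "coprime m q" "i < q" "j < q" "i < j"
  shows "q * a + m * i \<noteq> q * b + m * j"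
proof
  assume h: "q * a + m * i = q * b + m * j"
  then have "q * a = q * b + m * (j - i)" using assms(4) by (simp add: diff_mult_distrib2)
  then have "q dvd m * (j - i)" by (metis dvd_add_right_iff dvd_triv_left)
  then have "q dvd (j - i)" using assms(1) by (metis coprime_commute coprime_dvd_mult_right_iff)
  then have "q \<le> j - i" using assms(4) by (intro dvd_imp_le) auto
  then show False using assms by simp
qed

context ctx
begin

definition NR :: "'a poly poly \<Rightarrow> 'a poly" where
  "NR R = (\<Sum>i<q. coeff R i ^ q * fT ^ i)"

lemma qpos: "q > 0" using q2 by simp

lemma cop_q: "coprime m q"
  unfolding q_def using cop by simp

lemma degree_fT: "degree fT = m"
proof -
  have "degree [:\<beta>:] < degree (monom \<alpha> m)" using m1 a0 by (simp add: degree_monom_eq)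
  then have "degree (monom \<alpha> m - [:\<beta>:]) = degree (monom \<alpha> m)"
    using degree_add_eq_left[of "-[:\<beta>:]" "monom \<alpha> m"] by (simp only: diff_conv_add_uminus degree_minus)
  then show ?thesis using a0 by (simp add: fT_def degree_monom_eq)
qed
lemma fT_nz: "fT \<noteq> 0" using degree_fT m1 by auto

lemma nf: "\<exists>R. degree R < q \<and> ev2 \<iota> z t F = ev2 \<iota> z t R"
proof -
  obtain Q r where pd: "pseudo_divmod F g = (Q, r)" by (cases "pseudo_divmod F g") auto
  from pseudo_divmod[OF g_nz pd] lead_g have
    "F = g * Q + r" "r = 0 \<or> degree r < q" by (auto simp: degree_g)
  moreover have "ev2 \<iota> z t g = 0" using ker by simp
  ultimately show ?thesis using qpos
    by (intro exI[of _ r]) (auto simp: ev2_add ev2_mult)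
qed

lemma ev2_sum: "degree R < q \<Longrightarrow> ev2 \<iota> z t R = (\<Sum>i<q. E1 (coeff R i) * z ^ i)"
  unfolding ev2_E1
  by (subst poly_sum_lt[where n=q]) (auto simp: coeff_map_poly E1_0 intro: le_less_trans[OF map_poly_degree_leq])

lemma norm_eq: "degree R < q \<Longrightarrow> (ev2 \<iota> z t R) ^ q = E1 (NR R)"
proof -
  assume "degree R < q"
  then have "(ev2 \<iota> z t R) ^ q = (\<Sum>i<q. (E1 (coeff R i) * z ^ i) ^ q)"
    by (simp add: ev2_sum frob_sum_d)
  also have "\<dots> = (\<Sum>i<q. E1 (coeff R i ^ q * fT ^ i))"
    by (intro sum.cong refl) (simp add: power_mult_distrib E1_mult E1_power zq flip: power_mult zq
        , simp add: mult.commute power_mult)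
  finally show ?thesis by (simp add: NR_def E1_sum)
qed

lemma norm_deg:
  assumes "R \<noteq> 0" "degree R < q"
  shows "NR R \<noteq> 0 \<and> (\<exists>k i. degree (NR R) = q * k + m * i)"
proof -
  define T where "T i = coeff R i ^ q * fT ^ i" for i
  define h where "h i = q * degree (coeff R i) + m * i" for i
  define S where "S = {i. i < q \<and> coeff R i \<noteq> 0}"
  have Tnz: "T i \<noteq> 0" and Tdeg: "degree (T i) = h i" if "coeff R i \<noteq> 0" for i
    using that fT_nz by (auto simp: T_def h_def degree_mult_eq degree_power_eq degree_fT)
  have Tz: "T i = 0" if "coeff R i = 0" for i using that qpos by (simp add: T_def)
  have finS: "finite S" by (simp add: S_def)
  have "degree R \<in> S" using assms by (simp add: S_def)
  then have neS: "S \<noteq> {}" by auto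
  define i0 where "i0 = (SOME i. i \<in> S \<and> h i = Max (h ` S))"
  have "Max (h ` S) \<in> h ` S" using finS neS by (intro Max_in) auto
  then have "\<exists>i. i \<in> S \<and> h i = Max (h ` S)" by auto
  then have i0S: "i0 \<in> S" and i0max: "h i0 = Max (h ` S)"
    unfolding i0_def by (metis (mono_tags, lifting) someI_ex)+
  have lt: "h j < h i0" if "j \<in> S" "j \<noteq> i0" for j
  proof -
    have "h j \<le> h i0" using that i0max finS by simp
    moreover have "h j \<noteq> h i0"
      using that i0S distinct_deg[OF cop_q, of j i0] distinct_deg[OF cop_q, of i0 j]
      by (cases "j < i0") (auto simp: S_def h_def, metis nat_neq_iff)
    ultimately show ?thesis by simp
  qed
  define rest where "rest = (\<Sum>j\<in>{..<q} - {i0}. T j)"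
  have NR_split: "NR R = T i0 + rest"
  proof -
    have "NR R = (\<Sum>j\<in>{..<q}. T j)" by (simp add: NR_def T_def)
    also have "\<dots> = T i0 + rest" unfolding rest_def
      using i0S by (subst sum.remove[of _ i0]) (auto simp: S_def)
    finally show ?thesis .
  qed
  have "rest = 0 \<or> degree rest < h i0"
    unfolding rest_def
  proof (rule degree_sum_less)
    show "\<forall>j\<in>{..<q} - {i0}. T j = 0 \<or> degree (T j) < h i0"
    proof
      fix j assume j: "j \<in> {..<q} - {i0}"
      show "T j = 0 \<or> degree (T j) < h i0"
      proof (cases "coeff R j = 0")
        case True then show ?thesis by (simp add: Tz)
      next
        case False
        then have "j \<in> S" using j by (simp add: S_def)
        then show ?thesis using lt j False by (simp add: Tdeg)
      qed
    qed
  qed simp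
  moreover have c0: "coeff R i0 \<noteq> 0" using i0S by (simp add: S_def)
  ultimately have dN: "degree (NR R) = h i0"
    using Tdeg[OF c0] by (auto simp: NR_split degree_add_eq_left)
  have "coeff (NR R) (h i0) = lead_coeff (T i0) + coeff rest (h i0)"
    by (simp add: NR_split Tdeg[OF c0])
  also have "coeff rest (h i0) = 0"
    using \<open>rest = 0 \<or> degree rest < h i0\<close> by (auto simp: coeff_eq_0)
  finally have "coeff (NR R) (h i0) \<noteq> 0" using Tnz[OF c0] by simp
  then have "NR R \<noteq> 0" by auto
  then show ?thesis using dN unfolding h_def by blast
qed

lemma domain: "x \<noteq> 0 \<Longrightarrow> y \<noteq> 0 \<Longrightarrow> (x::'d) * y \<noteq> 0"
proof
  assume x: "x \<noteq> 0" and y: "y \<noteq> 0" and xy: "x * y = 0"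
  obtain R where R: "degree R < q" "x = ev2 \<iota> z t R" using nf surj by (metis surjD)
  obtain S where S: "degree S < q" "y = ev2 \<iota> z t S" using nf surj by (metis surjD)
  have "R \<noteq> 0" using R x by (auto simp: ev2_0)
  have "S \<noteq> 0" using S y by (auto simp: ev2_0)
  have "(x * y) ^ q = E1 (NR R * NR S)"
    using R S by (simp add: power_mult_distrib norm_eq E1_mult)
  moreover have "NR R * NR S \<noteq> 0"
    using norm_deg[OF \<open>R \<noteq> 0\<close> R(1)] norm_deg[OF \<open>S \<noteq> 0\<close> S(1)] by simp
  ultimately have "(x * y) ^ q \<noteq> 0" using E1_inj by metis
  then show False using xy qpos by (simp add: power_0_left)
qed

lemma norm_exists:
  assumes "w \<noteq> 0"
  shows "\<exists>N k i. N \<noteq> 0 \<and> w ^ q = E1 N \<and> degree N = q * k + m * i"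
proof -
  obtain R where R: "degree R < q" "w = ev2 \<iota> z t R" using nf surj by (metis surjD)
  have "R \<noteq> 0" using R assms by (auto simp: ev2_0)
  then show ?thesis using norm_deg[OF \<open>R \<noteq> 0\<close> R(1)] norm_eq[OF R(1)] R(2) by blast
qed

lemma lucas:
  assumes "M = p ^ r * M'" "M' > 0"
  shows "(of_nat (M choose p ^ r) :: 'a) = of_nat M'"
proof -
  define s where "s = p ^ r"
  have spos: "s > 0" using ppos by (simp add: s_def)
  have X: "[:1,1:] = (1::'a poly) + monom 1 1"
    by (rule poly_eqI) (simp add: coeff_pCons split: nat.splits)
  have Xs: "[:1,1:] ^ s = (1::'a poly) + monom 1 s"
  proof -
    have "((1::'a poly) + monom 1 1) ^ s = 1 ^ s + monom 1 1 ^ s"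
      by (rule freshmans_dream') (simp_all add: charp p_prime s_def)
    then show ?thesis using X by (simp add: monom_power)
  qed
  have "(of_nat (M choose s) :: 'a) = coeff ([:1,1:] ^ M) s"
    using coeff_linear_poly_power[of s M "1::'a" 1] assms spos
    by (simp add: s_def)
  also have "[:1,1:] ^ M = ((1::'a poly) + monom 1 s) ^ M'"
    by (simp add: assms(1) s_def power_mult flip: Xs[unfolded s_def])
  also have "\<dots> = (\<Sum>k\<le>M'. of_nat (M' choose k) * monom 1 s ^ k * 1 ^ (M' - k))"
    by (subst add.commute) (rule binomial_ring)
  also have "\<dots> = (\<Sum>k\<le>M'. monom (of_nat (M' choose k)) (s * k))"
    by (intro sum.cong refl) (simp add: monom_power of_nat_poly smult_monom)
  also have "coeff \<dots> s = (\<Sum>k\<le>M'. if k = 1 then of_nat (M' choose k) else 0)"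
    unfolding coeff_sum using spos by (intro sum.cong refl) auto
  also have "\<dots> = of_nat M'" using assms(2) by (simp add: sum.delta)
  finally show ?thesis by (simp add: s_def)
qed

end


locale ctx2 = ctx \<iota> z t p e m \<alpha> \<beta>
  for \<iota> :: "'a::field \<Rightarrow> 'd::comm_ring_1" and z t p e m \<alpha> \<beta> +
  fixes \<phi> :: "'d \<Rightarrow> 'd poly"
  assumes ex: "exp_map \<iota> \<phi>"
begin

lemma ph_add: "\<phi> (x + y) = \<phi> x + \<phi> y" using ex by (simp add: exp_map_def)
lemma ph_mult: "\<phi> (x * y) = \<phi> x * \<phi> y" using ex by (simp add: exp_map_def)
lemma ph_1: "\<phi> 1 = 1" using ex by (simp add: exp_map_def)
lemma ph_i: "\<phi> (\<iota> c) = [:\<iota> c:]" using ex by (simp add: exp_map_def)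
lemma ph_ev: "coeff (\<phi> a) 0 = a" using ex by (simp add: exp_map_def poly_0_coeff_0)
lemma ph_it: "map_poly \<phi> (\<phi> a) = poly (map_poly (\<lambda>c. [:[:c:]:]) (\<phi> a)) [:[:0, 1:], 1:]"
  using ex by (simp add: exp_map_def)
lemma ph_0: "\<phi> 0 = 0" using ph_add[of 0 0] by simp
lemma ph_minus: "\<phi> (- x) = - \<phi> x"
  using ph_add[of x "-x"] by (simp add: ph_0 eq_neg_iff_add_eq_0 add.commute)
lemma ph_diff: "\<phi> (x - y) = \<phi> x - \<phi> y"
  using ph_add[of x "-y"] by (simp add: ph_minus)
lemma ph_power: "\<phi> (x ^ k) = \<phi> x ^ k"
  by (induct k) (simp_all add: ph_1 ph_mult)

lemma iter: "coeff (\<phi> (coeff (\<phi> a) k)) l = of_nat ((k+l) choose k) * coeff (\<phi> a) (k+l)"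
proof -
  have "coeff (map_poly \<phi> (\<phi> a)) k = \<phi> (coeff (\<phi> a) k)" by (simp add: coeff_map_poly ph_0)
  then have "\<phi> (coeff (\<phi> a) k) = coeff (poly (map_poly (\<lambda>c. [:[:c:]:]) (\<phi> a)) [:[:0, 1:], 1:]) k"
    using ph_it by metis
  then show ?thesis by (simp add: iter_coeff)
qed

lemma ph_nz: "a \<noteq> 0 \<Longrightarrow> \<phi> a \<noteq> 0" using ph_ev[of a] by auto

lemma deg0: "degree (\<phi> a) = 0 \<Longrightarrow> \<phi> a = [:a:]"
  by (rule poly_eqI) (auto simp: coeff_pCons ph_ev coeff_eq_0 split: nat.splits)

lemma pmul: "P \<noteq> 0 \<Longrightarrow> Q \<noteq> 0 \<Longrightarrow> (P::'d poly) * Q \<noteq> 0 \<and> degree (P * Q) = degree P + degree Q"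
proof -
  assume P: "P \<noteq> 0" and Q: "Q \<noteq> 0"
  have c: "coeff (P * Q) (degree P + degree Q) \<noteq> 0"
    using P Q domain by (simp add: coeff_mult_degree_sum)
  then have "P * Q \<noteq> 0" by auto
  moreover have "degree (P * Q) = degree P + degree Q"
    using c degree_mult_le le_degree by (metis antisym)
  ultimately show ?thesis by simp
qed

lemma ppow: "(P::'d poly) \<noteq> 0 \<Longrightarrow> P ^ k \<noteq> 0 \<and> degree (P ^ k) = k * degree P"
  by (induct k) (auto simp: pmul one_nz)

lemma triv_if: assumes "\<phi> z = [:z:]" "\<phi> t = [:t:]" shows "\<phi> a = [:a:]"
proof -
  have E: "\<phi> (E1 h) = [:E1 h:]" for h
    by (induct h) (simp_all add: E1_0 ph_0 E1_pCons ph_add ph_mult ph_i assms(2))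
  have "\<phi> (ev2 \<iota> z t F) = [:ev2 \<iota> z t F:]" for F
    by (induct F) (simp_all add: ev2_0 ph_0 ev2_pCons ph_add ph_mult E assms(1))
  then show ?thesis using surj by (metis surjD)
qed

lemma deg_E1:
  assumes n: "degree (\<phi> t) > 0" and h: "h \<noteq> 0"
  shows "degree (\<phi> (E1 h)) = degree (\<phi> t) * degree h"
  using h
proof (induct h)
  case 0 then show ?case by simp
next
  case (pCons a h)
  show ?case
  proof (cases "h = 0")
    case True
    then show ?thesis by (simp add: E1_pCons ph_i E1_0)
  next
    case False
    have tnz: "t \<noteq> 0" using n by (auto simp: ph_0)
    have Enz: "E1 h \<noteq> 0" using False E1_inj by blast
    have "degree (\<phi> t * \<phi> (E1 h)) = degree (\<phi> t) + degree (\<phi> t) * degree h"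
      using pmul[OF ph_nz[OF tnz] ph_nz[OF Enz]] pCons(2)[OF False] by simp
    then have "degree (\<phi> (E1 (pCons a h))) = degree (\<phi> t) + degree (\<phi> t) * degree h"
      using n by (simp add: E1_pCons ph_add ph_mult ph_i degree_add_eq_right)
    then show ?thesis using False by simp
  qed
qed

lemma main: "trivial_exp_map \<phi>"
proof (rule ccontr)
  assume nt: "\<not> trivial_exp_map \<phi>"
  define n where "n = degree (\<phi> t)"
  define M where "M = degree (\<phi> z)"
  have not_both: "\<not> (M = 0 \<and> n = 0)"
    using nt triv_if deg0 unfolding trivial_exp_map_def M_def n_def by metis
  have rel: "\<phi> z ^ q = [:\<iota> \<alpha>:] * \<phi> t ^ m - [:\<iota> \<beta>:]"
    using arg_cong[OF zq, of \<phi>] by (simp add: E1_fT ph_power ph_diff ph_mult ph_i)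
  have ia: "\<iota> \<alpha> \<noteq> 0" using a0 i_inj by blast
  have npos: "n > 0"
  proof (rule ccontr)
    assume "\<not> n > 0"
    then have "\<phi> t = [:t:]" using deg0 n_def by simp
    then have "degree (\<phi> z ^ q) = 0" using rel by (simp add: poly_const_pow)
    moreover have "M > 0" using not_both \<open>\<not> n > 0\<close> by simp
    then have "z \<noteq> 0" by (auto simp: M_def ph_0)
    then have "degree (\<phi> z ^ q) = q * M" using ppow[OF ph_nz] M_def by blast
    ultimately show False using qpos \<open>M > 0\<close> by simp
  qed
  have tnz: "t \<noteq> 0" using npos by (auto simp: n_def ph_0)
  have d1: "[:\<iota> \<alpha>:] * \<phi> t ^ m \<noteq> 0 \<and> degree ([:\<iota> \<alpha>:] * \<phi> t ^ m) = m * n"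
    using pmul[of "[:\<iota> \<alpha>:]" "\<phi> t ^ m"] ppow[OF ph_nz[OF tnz], of m] ia by (simp add: n_def)
  have dR: "degree ([:\<iota> \<alpha>:] * \<phi> t ^ m - [:\<iota> \<beta>:]) = m * n"
  proof -
    have "degree (- [:\<iota> \<beta>:]) < degree ([:\<iota> \<alpha>:] * \<phi> t ^ m)" using d1 m1 npos by simp
    then have "degree ([:\<iota> \<alpha>:] * \<phi> t ^ m + - [:\<iota> \<beta>:]) = degree ([:\<iota> \<alpha>:] * \<phi> t ^ m)"
      by (rule degree_add_eq_left)
    then show ?thesis using d1 by (metis diff_conv_add_uminus)
  qed
  have znz: "z \<noteq> 0"
  proof
    assume "z = 0"
    then have "\<phi> z ^ q = 0" using qpos by (simp add: ph_0 power_0_left)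
    then show False using rel dR m1 npos by simp
  qed
  have qM: "q * M = m * n" using ppow[OF ph_nz[OF znz], of q] rel dR by (simp add: M_def)
  have "q dvd m * n" using qM by (metis dvd_triv_left)
  then have "q dvd n" using cop_q by (metis coprime_commute coprime_dvd_mult_right_iff)
  then obtain d where nd: "n = q * d" by blast
  have Md: "M = m * d" using qM nd qpos by simp
  have dpos: "d > 0" using nd npos by simp
  have Mpos: "M > 0" using Md dpos m1 by simp
  define r where "r = multiplicity p M"
  define s where "s = p ^ r"
  obtain M' where M': "M = p ^ r * M'" "\<not> p dvd M'"
    using multiplicity_decompose'[of M p] Mpos p2 unfolding r_def by auto
  have M'pos: "M' > 0" using M' Mpos by (cases M') auto
  have "s dvd m * d" using M' Md by (simp add: s_def)
  moreover have "coprime s m" using cop unfolding s_def by (simp add: coprime_commute)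
  ultimately have "s dvd d" by (metis coprime_dvd_mult_right_iff)
  then have sd: "s \<le> d" using dpos by (simp add: dvd_imp_le)
  have spos: "s > 0" using ppos by (simp add: s_def)
  have sM: "s \<le> M" using M' M'pos by (simp add: s_def)
  define i0 where "i0 = M - s"
  define w where "w = coeff (\<phi> z) i0"
  have cw: "coeff (\<phi> w) l = of_nat ((i0+l) choose i0) * coeff (\<phi> z) (i0+l)" for l
    unfolding w_def by (rule iter)
  have "coeff (\<phi> w) l = 0" if "l > s" for l
    using that cw[of l] sM by (simp add: coeff_eq_0 M_def i0_def)
  then have degw_le: "degree (\<phi> w) \<le> s" by (meson degree_le not_le)
  have "of_nat (M choose s) = (of_nat M' :: 'a)" using lucas[OF M'(1) M'pos] by (simp add: s_def)
  moreover have "(of_nat M' :: 'a) \<noteq> 0" using M'(2) charp by (simp add: of_nat_eq_0_iff_char_dvd)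
  ultimately have "(of_nat (M choose s) :: 'a) \<noteq> 0" by simp
  then have Cnz: "(of_nat (M choose s) :: 'd) \<noteq> 0" using i_of_nat i_inj by metis
  have "coeff (\<phi> w) s = of_nat (M choose s) * lead_coeff (\<phi> z)"
    using cw[of s] sM binomial_symmetric[OF sM] by (simp add: i0_def M_def)
  moreover have "lead_coeff (\<phi> z) \<noteq> 0" using ph_nz[OF znz] by simp
  ultimately have cws: "coeff (\<phi> w) s \<noteq> 0" using Cnz domain by simp
  then have degw: "degree (\<phi> w) = s" using degw_le le_degree by (metis antisym)
  have wnz: "w \<noteq> 0" using cws by (auto simp: ph_0)
  obtain N k i where N: "N \<noteq> 0" "w ^ q = E1 N" "degree N = q * k + m * i"
    using norm_exists[OF wnz] by blast
  have e1: "degree (\<phi> (w ^ q)) = q * s" using ppow[OF ph_nz[OF wnz], of q] degw by (simp add: ph_power)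
  have e2: "degree (\<phi> (E1 N)) = n * degree N" using deg_E1[OF _ N(1)] npos by (simp add: n_def)
  have "q * s = q * (d * (q * k + m * i))" using e1 e2 N(2,3) nd by (metis mult.assoc)
  then have sK: "s = d * (q * k + m * i)" using qpos mult_left_cancel[of q] by simp
  then have "q * k + m * i \<le> 1" using sd dpos
    by (metis mult_le_cancel1 nat_mult_1_right not_less)
  moreover have "q * k + m * i \<noteq> 0" using sK spos by auto
  moreover have "k = 0"
  proof (rule ccontr)
    assume "k \<noteq> 0" then have "q \<le> q * k" by simp
    then show False using \<open>q * k + m * i \<le> 1\<close> q2 by linarith
  qed
  moreover have "i = 0"
  proof (rule ccontr)
    assume "i \<noteq> 0" then have "m \<le> m * i" by simp
    then show False using \<open>q * k + m * i \<le> 1\<close> m1 by linarith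
  qed
  ultimately show False by simp
qed

end

theorem lemma3p2:
  fixes \<iota> :: "'a::field \<Rightarrow> 'd::comm_ring_1"
    and z t :: 'd and p e m :: nat and \<alpha> \<beta> :: 'a
  assumes "CHAR('a) = p" and "p > 0"
    and "\<alpha> \<noteq> 0" and "\<beta> \<noteq> 0" and "e \<ge> 1" and "m > 1" and "coprime m p"
    and "presents \<iota> z t (gpoly p e m \<alpha> \<beta>)"
  shows "\<forall>\<phi>. exp_map \<iota> \<phi> \<longrightarrow> trivial_exp_map \<phi>"
proof (intro allI impI)
  fix \<phi> assume ex: "exp_map \<iota> \<phi>"
  interpret ctx2 \<iota> z t p e m \<alpha> \<beta> \<phi>
    using assms ex by (simp add: ctx2_def ctx_def ctx2_axioms_def)
  show "trivial_exp_map \<phi>" by (rule main)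
qed

end
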